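(* Let $n=3$ agents all have budget $1$, let all goods have positive costs, and let $\mathbf X=(X_1,X_2,X_3)$ be a budget-feasible allocation. Let $s_1,s_2,s_3\ge 0$ be such that $v_i(g)\le s_i$ for every agent $i$ and every good $g\in X_1\cup X_2\cup X_3$. Then there exists a budget-feasible allocation $\mathbf Y=(Y_1,Y_2,Y_3)$ that is EFx (with respect to budgets), with $Y_1\cup Y_2\cup Y_3\subseteq X_1\cup X_2\cup X_3$, and a labeling $\{i,j,k\}=\{1,2,3\}$ of the agents such that $$v_i(Y_i)\ge \frac{v_i(X_i)}{9}-\frac{s_i}{3},\qquad v_j(Y_j)\ge \frac{v_j(X_j)}{9}-\frac{2s_j}{3},\qquad v_k(Y_k)\ge\frac{v_k(X_k)}{9}-s_k.$$
   Context: Goods have costs $c(g)>0$, $c(S)=\sum_{g\in S}c(g)$; agents have additive nonnegative valuations. An allocation is a tuple of pairwise disjoint sets of goods (not all goods need be allocated); it is budget-feasible if $c(X_i)\le B_i$ for all $i$. An allocation $\mathbf X$ is EFx (with respect to budgets) if for all agents $i\ne j$, every $S\subseteq X_j$ with $c(S)\le B_i$ and every $g\in S$, $v_i(X_i)\ge v_i(S\setminus\{g\})$. *)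

theory Defs
  imports "HOL-Analysis.Analysis"
begin

(* Agents are 0..<n; goods form a finite set M of type 'g.
   c: cost of goods; v i: additive valuation of agent i (given on single goods). *)

definition cost :: "('g \<Rightarrow> real) \<Rightarrow> 'g set \<Rightarrow> real" where
  "cost c S = (\<Sum>g\<in>S. c g)"

definition val :: "('g \<Rightarrow> real) \<Rightarrow> 'g set \<Rightarrow> real" where
  "val u S = (\<Sum>g\<in>S. u g)"

definition is_allocation :: "nat \<Rightarrow> 'g set \<Rightarrow> (nat \<Rightarrow> 'g set) \<Rightarrow> bool" where
  "is_allocation n M X \<longleftrightarrow>
     (\<forall>i<n. X i \<subseteq> M) \<and> (\<forall>i<n. \<forall>j<n. i \<noteq> j \<longrightarrow> X i \<inter> X j = {})"

definition budget_feasible ::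
  "nat \<Rightarrow> ('g \<Rightarrow> real) \<Rightarrow> (nat \<Rightarrow> real) \<Rightarrow> (nat \<Rightarrow> 'g set) \<Rightarrow> bool" where
  "budget_feasible n c B X \<longleftrightarrow> (\<forall>i<n. cost c (X i) \<le> B i)"

definition EFx_budget ::
  "nat \<Rightarrow> ('g \<Rightarrow> real) \<Rightarrow> (nat \<Rightarrow> real) \<Rightarrow> (nat \<Rightarrow> 'g \<Rightarrow> real) \<Rightarrow> (nat \<Rightarrow> 'g set) \<Rightarrow> bool" where
  "EFx_budget n c B v X \<longleftrightarrow>
     (\<forall>i<n. \<forall>j<n. i \<noteq> j \<longrightarrow>
        (\<forall>S. S \<subseteq> X j \<longrightarrow> cost c S \<le> B i \<longrightarrow>
           (\<forall>g\<in>S. val (v i) (X i) \<ge> val (v i) (S - {g}))))"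

end

theory Submission
  imports Defs
begin

lemma val_mono: "finite B \<Longrightarrow> A \<subseteq> B \<Longrightarrow> (\<And>x. x \<in> B \<Longrightarrow> u x \<ge> 0) \<Longrightarrow> val u A \<le> val u B"
  unfolding val_def by (rule sum_mono2) auto

lemma val_nonneg: "(\<And>x. x \<in> A \<Longrightarrow> u x \<ge> 0) \<Longrightarrow> val u A \<ge> 0"
  unfolding val_def by (rule sum_nonneg) auto

lemma val_remove: "finite A \<Longrightarrow> g \<in> A \<Longrightarrow> val u A = val u (A - {g}) + u g"
  unfolding val_def by (simp add: sum.remove)

lemma cost_mono: "finite B \<Longrightarrow> A \<subseteq> B \<Longrightarrow> (\<And>x. x \<in> B \<Longrightarrow> c x > 0) \<Longrightarrow> cost c A \<le> cost c B"
  unfolding cost_def by (rule sum_mono2) (auto simp: less_imp_le)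

lemma val_Un_le: "finite A \<Longrightarrow> finite B \<Longrightarrow> (\<And>x. x \<in> A \<Longrightarrow> u x \<ge> 0) \<Longrightarrow> val u (A \<union> B) \<le> val u A + val u B"
  unfolding val_def by (simp add: sum_Un) (rule sum_nonneg, auto)

lemma val_split4:
  assumes "finite A" "\<And>x. x \<in> A \<Longrightarrow> u x \<ge> 0"
  shows "val u A \<le> val u (A \<inter> B0) + val u (A \<inter> B1) + val u (A \<inter> B2) + val u (A - (B0 \<union> B1 \<union> B2))"
proof -
  have e: "A = (A \<inter> (B0 \<union> B1 \<union> B2)) \<union> (A - (B0 \<union> B1 \<union> B2))" by blast
  have "val u A = val u (A \<inter> (B0 \<union> B1 \<union> B2)) + val u (A - (B0 \<union> B1 \<union> B2))"
    unfolding val_def using assms(1) by (subst e, subst sum.union_disjoint) auto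
  moreover have eq: "A \<inter> (B0 \<union> B1 \<union> B2) = (A \<inter> B0) \<union> (A \<inter> B1) \<union> (A \<inter> B2)" by blast
  moreover have "val u ((A \<inter> B0) \<union> (A \<inter> B1) \<union> (A \<inter> B2)) \<le> val u (A \<inter> B0) + val u (A \<inter> B1) + val u (A \<inter> B2)"
  proof -
    have "val u ((A \<inter> B0) \<union> (A \<inter> B1) \<union> (A \<inter> B2)) \<le> val u ((A \<inter> B0) \<union> (A \<inter> B1)) + val u (A \<inter> B2)"
      by (rule val_Un_le) (use assms in auto)
    moreover have "val u ((A \<inter> B0) \<union> (A \<inter> B1)) \<le> val u (A \<inter> B0) + val u (A \<inter> B1)"
      by (rule val_Un_le) (use assms in auto)
    ultimately show ?thesis by linarith
  qed
  ultimately show ?thesis unfolding eq by linarith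
qed

theorem mainTheorem7:
  fixes M :: "'g set" and c :: "'g \<Rightarrow> real" and v :: "nat \<Rightarrow> 'g \<Rightarrow> real"
    and X :: "nat \<Rightarrow> 'g set" and s :: "nat \<Rightarrow> real"
  assumes finM: "finite M"
    and cpos: "\<And>g. g \<in> M \<Longrightarrow> c g > 0"
    and vnn: "\<And>i g. i < 3 \<Longrightarrow> g \<in> M \<Longrightarrow> v i g \<ge> 0"
    and Xalloc: "is_allocation 3 M X"
    and Xfeas: "budget_feasible 3 c (\<lambda>_. 1) X"
    and snn: "\<And>i. i < 3 \<Longrightarrow> s i \<ge> 0"
    and sbound: "\<And>i g. i < 3 \<Longrightarrow> g \<in> X 0 \<union> X 1 \<union> X 2 \<Longrightarrow> v i g \<le> s i"
  shows "\<exists>Y i j k.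
           is_allocation 3 M Y \<and> budget_feasible 3 c (\<lambda>_. 1) Y \<and>
           EFx_budget 3 c (\<lambda>_. 1) v Y \<and>
           Y 0 \<union> Y 1 \<union> Y 2 \<subseteq> X 0 \<union> X 1 \<union> X 2 \<and>
           {i, j, k} = {0, 1, 2::nat} \<and>
           val (v i) (Y i) \<ge> val (v i) (X i) / 9 - s i / 3 \<and>
           val (v j) (Y j) \<ge> val (v j) (X j) / 9 - 2 * s j / 3 \<and>
           val (v k) (Y k) \<ge> val (v k) (X k) / 9 - s k"
proof -
  define U where "U = X 0 \<union> X 1 \<union> X 2"
  have XM: "\<And>i. i < 3 \<Longrightarrow> X i \<subseteq> M" using Xalloc unfolding is_allocation_def by auto
  have UM: "U \<subseteq> M" unfolding U_def using XM[of 0] XM[of 1] XM[of 2] by auto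
  have finU: "finite U" using UM finM finite_subset by blast
  have XU: "\<And>i. i < 3 \<Longrightarrow> X i \<subseteq> U" unfolding U_def
    by (auto simp: less_Suc_eq numeral_3_eq_3 eval_nat_numeral)
  define F where "F = {Y :: nat \<Rightarrow> 'g set. (\<forall>x. (x \<in> {..<3::nat} \<longrightarrow> Y x \<in> Pow U) \<and> (x \<notin> {..<3} \<longrightarrow> Y x = {})) \<and>
     is_allocation 3 M Y \<and> budget_feasible 3 c (\<lambda>_. 1) Y \<and> EFx_budget 3 c (\<lambda>_. 1) v Y}"
  define \<phi> where "\<phi> Y = val (v 0) (Y 0) + val (v 1) (Y 1) + val (v 2) (Y 2)" for Y :: "nat \<Rightarrow> 'g set"
  have finF: "finite F"
    by (rule finite_subset[OF _ finite_set_of_finite_funs[of "{..<3::nat}" "Pow U" "{}"]])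
       (auto simp: F_def finU)
  have emp: "(\<lambda>_. {}) \<in> F"
    by (auto simp: F_def is_allocation_def budget_feasible_def EFx_budget_def cost_def val_def)
  define m where "m = Max (\<phi> ` F)"
  have "m \<in> \<phi> ` F" unfolding m_def using finF emp by (intro Max_in) auto
  then obtain Y where YF: "Y \<in> F" and Ym: "\<phi> Y = m" by auto
  have Ymax: "\<And>Y'. Y' \<in> F \<Longrightarrow> \<phi> Y' \<le> \<phi> Y" using Ym finF unfolding m_def by auto
  have YU: "\<And>i. i < 3 \<Longrightarrow> Y i \<subseteq> U" and Yout: "\<And>i. \<not> i < 3 \<Longrightarrow> Y i = {}"
    using YF unfolding F_def by auto
  have YM: "\<And>i. i < 3 \<Longrightarrow> Y i \<subseteq> M" using YU UM by blast
  have Yal: "is_allocation 3 M Y" and Yfe: "budget_feasible 3 c (\<lambda>_. 1) Y"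
    and Yef: "EFx_budget 3 c (\<lambda>_. 1) v Y" using YF unfolding F_def by auto
  have Ydisj: "\<And>i j. i < 3 \<Longrightarrow> j < 3 \<Longrightarrow> i \<noteq> j \<Longrightarrow> Y i \<inter> Y j = {}"
    using Yal unfolding is_allocation_def by auto
  have Ycost: "\<And>i. i < 3 \<Longrightarrow> cost c (Y i) \<le> 1" using Yfe unfolding budget_feasible_def by auto
  have Yefx: "\<And>i j S g. i < 3 \<Longrightarrow> j < 3 \<Longrightarrow> i \<noteq> j \<Longrightarrow> S \<subseteq> Y j \<Longrightarrow> cost c S \<le> 1 \<Longrightarrow> g \<in> S
      \<Longrightarrow> val (v i) (S - {g}) \<le> val (v i) (Y i)"
    using Yef unfolding EFx_budget_def by blast
  have nostep: "val (v i) (X i - (Y 0 \<union> Y 1 \<union> Y 2)) \<le> val (v i) (Y i)" if i3: "i < 3" for i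
  proof (rule ccontr)
    assume A: "\<not> ?thesis"
    define P where "P = X i - (Y 0 \<union> Y 1 \<union> Y 2)"
    have PX: "P \<subseteq> X i" unfolding P_def by auto
    have PM: "P \<subseteq> M" using PX XM i3 by blast
    have PU: "P \<subseteq> U" using PX XU i3 by blast
    have Pdisj: "\<And>l. l < 3 \<Longrightarrow> P \<inter> Y l = {}"
      unfolding P_def by (auto simp: less_Suc_eq numeral_3_eq_3 eval_nat_numeral)
    define E where "E = (\<lambda>Z. Z \<subseteq> P \<and> (\<exists>h<3. val (v h) Z > val (v h) (Y h)))"
    have "E P" unfolding E_def P_def using A i3 by auto
    then obtain Z where EZ: "E Z" and Zmin: "\<And>Z'. E Z' \<Longrightarrow> card Z \<le> card Z'"
      using ex_has_least_nat[of E P card] by blast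
    from EZ obtain h where h3: "h < 3" and hZ: "val (v h) Z > val (v h) (Y h)" and ZP: "Z \<subseteq> P"
      unfolding E_def by auto
    have finP: "finite P" using PM finM finite_subset by blast
    have finZ: "finite Z" using ZP finP finite_subset by blast
    have ZM: "Z \<subseteq> M" using ZP PM by blast
    define Y' where "Y' = Y(h := Z)"
    have Y'F: "Y' \<in> F"
      unfolding F_def mem_Collect_eq
    proof (intro conjI)
      show "\<forall>x. (x \<in> {..<3} \<longrightarrow> Y' x \<in> Pow U) \<and> (x \<notin> {..<3} \<longrightarrow> Y' x = {})"
        using YU Yout ZP PU h3 by (auto simp: Y'_def)
      show "is_allocation 3 M Y'"
        unfolding is_allocation_def Y'_def using YM ZM Ydisj Pdisj ZP by auto blast+
      show "budget_feasible 3 c (\<lambda>_. 1) Y'"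
        unfolding budget_feasible_def Y'_def
      proof (intro allI impI)
        fix l :: nat assume l3: "l < 3"
        show "cost c ((Y(h := Z)) l) \<le> 1"
        proof (cases "l = h")
          case True
          have "cost c Z \<le> cost c (X i)"
            using cost_mono[of "X i" Z c] XM[OF i3] finM ZP PX cpos finite_subset by blast
          moreover have "cost c (X i) \<le> 1" using Xfeas i3 unfolding budget_feasible_def by auto
          ultimately show ?thesis using True by simp
        qed (use Ycost l3 in auto)
      qed
      show "EFx_budget 3 c (\<lambda>_. 1) v Y'"
        unfolding EFx_budget_def
      proof (intro allI impI ballI)
        fix a b S g assume a3: "a < 3" and b3: "b < 3" and ab: "a \<noteq> b" and SY: "S \<subseteq> Y' b"
          and cS: "cost c S \<le> 1" and gS: "g \<in> S"
        show "val (v a) (S - {g}) \<le> val (v a) (Y' a)"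
        proof (cases "b = h")
          case True
          then have ah: "a \<noteq> h" using ab by auto
          have SZ: "S \<subseteq> Z" using SY True by (simp add: Y'_def)
          show ?thesis
          proof (rule ccontr)
            assume "\<not> ?thesis"
            then have "val (v a) (S - {g}) > val (v a) (Y a)" using ah by (simp add: Y'_def)
            then have "E (S - {g})" unfolding E_def using SZ ZP a3 by auto
            then have "card Z \<le> card (S - {g})" by (rule Zmin)
            moreover have "card (S - {g}) < card Z"
              using psubset_card_mono[OF finZ, of "S - {g}"] SZ gS by auto
            ultimately show False by simp
          qed
        next
          case False
          then have SYb: "S \<subseteq> Y b" using SY by (simp add: Y'_def)
          have old: "val (v a) (S - {g}) \<le> val (v a) (Y a)" using Yefx[OF a3 b3 ab SYb cS gS] .
          show ?thesis
          proof (cases "a = h")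
            case True
            then show ?thesis using old hZ by (simp add: Y'_def)
          next
            case False
            then show ?thesis using old by (simp add: Y'_def)
          qed
        qed
      qed
    qed
    have "\<phi> Y' > \<phi> Y"
    proof -
      have "h = 0 \<or> h = 1 \<or> h = 2" using h3 by auto
      then show ?thesis using hZ unfolding \<phi>_def Y'_def by auto
    qed
    with Ymax[OF Y'F] show False by simp
  qed
  have bound: "val (v i) (Y i) \<ge> val (v i) (X i) / 9 - s i / 3" if i3: "i < 3" for i
  proof -
    have vn: "\<And>g. g \<in> M \<Longrightarrow> v i g \<ge> 0" using vnn i3 by auto
    have cmp: "val (v i) (Y j) \<le> val (v i) (Y i) + s i" if j3: "j < 3" for j
    proof (cases "j = i")
      case True then show ?thesis using snn i3 by simp
    next
      case False
      show ?thesis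
      proof (cases "Y j = {}")
        case True
        have "val (v i) (Y i) \<ge> 0" using val_nonneg[of "Y i" "v i"] vn YM[OF i3] by blast
        then show ?thesis using True snn[OF i3] by (simp add: val_def)
      next
        case ne: False
        then obtain g where g: "g \<in> Y j" by auto
        have finYj: "finite (Y j)" using YM[OF j3] finM finite_subset by blast
        have "val (v i) (Y j - {g}) \<le> val (v i) (Y i)"
          using Yefx[OF i3 j3 _ _ Ycost[OF j3] g] False by auto
        moreover have "val (v i) (Y j) = val (v i) (Y j - {g}) + v i g"
          using val_remove[OF finYj g] .
        moreover have "v i g \<le> s i" using sbound[OF i3] g YU[OF j3] unfolding U_def by blast
        ultimately show ?thesis by linarith
      qed
    qed
    have finX: "finite (X i)" using XM[OF i3] finM finite_subset by blast
    have piece: "val (v i) (X i \<inter> Y j) \<le> val (v i) (Y i) + s i" if j3: "j < 3" for j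
    proof -
      have "finite (Y j)" using YM[OF j3] finM finite_subset by blast
      then have "val (v i) (X i \<inter> Y j) \<le> val (v i) (Y j)"
        using val_mono[of "Y j" "X i \<inter> Y j" "v i"] vn YM[OF j3] by blast
      then show ?thesis using cmp[OF j3] by linarith
    qed
    have "val (v i) (X i) \<le> val (v i) (X i \<inter> Y 0) + val (v i) (X i \<inter> Y 1) + val (v i) (X i \<inter> Y 2)
         + val (v i) (X i - (Y 0 \<union> Y 1 \<union> Y 2))"
      using val_split4[OF finX] vn XM[OF i3] by blast
    moreover note piece[of 0] piece[of 1] piece[of 2] nostep[OF i3]
    moreover have "val (v i) (Y i) \<ge> 0" using val_nonneg[of "Y i" "v i"] vn YM[OF i3] by blast
    moreover have "s i \<ge> 0" using snn[OF i3] .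
    ultimately show ?thesis by simp
  qed
  show ?thesis
  proof (intro exI conjI)
    show "is_allocation 3 M Y" "budget_feasible 3 c (\<lambda>_. 1) Y" "EFx_budget 3 c (\<lambda>_. 1) v Y" by fact+
    show "Y 0 \<union> Y 1 \<union> Y 2 \<subseteq> X 0 \<union> X 1 \<union> X 2" using YU[of 0] YU[of 1] YU[of 2] unfolding U_def by auto
    show "{0, 1, 2} = {0, 1, 2::nat}" by simp
    show "val (v 0) (Y 0) \<ge> val (v 0) (X 0) / 9 - s 0 / 3" using bound[of 0] by simp
    show "val (v 1) (Y 1) \<ge> val (v 1) (X 1) / 9 - 2 * s 1 / 3" using bound[of 1] snn[of 1] by simp
    show "val (v 2) (Y 2) \<ge> val (v 2) (X 2) / 9 - s 2" using bound[of 2] snn[of 2] by simp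
  qed
qed

end
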